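(* Let $m,n$ be positive integers and $\alpha\in\mathbb{R}$. Consider the scalar equation $\partial_tu+u^m\partial_xu^n=0$, rewritten as $\partial_tu+\partial_x(u^{m+n})-u^n\partial_x(u^m)=0$, with entropy pair $U(u)=u^2/2$, $F(u)=\frac{n}{m+n+1}u^{m+n+1}$, and the semi-discretization on a uniform grid of spacing $\Delta x$ $$\partial_tu_i+\frac{f^{\mathrm{num}}_{i+1/2}-f^{\mathrm{num}}_{i-1/2}}{\Delta x}-\alpha\frac{h^{\mathrm{num}}_{i+1/2}[\![u^m]\!]_{i+1/2}+h^{\mathrm{num}}_{i-1/2}[\![u^m]\!]_{i-1/2}}{2\Delta x}-(1-\alpha)\frac{u_i^n[\![u^m]\!]_{i+1/2}+u_i^n[\![u^m]\!]_{i-1/2}}{2\Delta x}=0,$$ where $h^{\mathrm{num}}\colon\mathbb{R}^2\to\mathbb{R}$ is any symmetric function with $h^{\mathrm{num}}(u,u)=u^n$, subscripts $i+1/2$ mean evaluation at $(u_-,u_+)=(u_i,u_{i+1})$, and $$f^{\mathrm{num}}(u_-,u_+)=\frac{m+1}{m+n+1}\sum_{k=0}^{m+n}u_+^{m+n-k}u_-^k-\alpha\{\{u\}\}h^{\mathrm{num}}\sum_{k=0}^{m-1}u_+^{m-1-k}u_-^k-(1-\alpha)\{\{u^{n+1}\}\}\sum_{k=0}^{m-1}u_+^{m-1-k}u_-^k.$$ Then this semi-discretization is entropy-conservative for $U=u^2/2$.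
   Context: For a function $a$ and states $u_\pm$: $\{\{a\}\}=\tfrac12(a(u_-)+a(u_+))$, $[\![a]\!]=a(u_+)-a(u_-)$. Entropy-conservative for $(U,F)$ means: there exists $F^{\mathrm{num}}\colon\mathbb{R}^2\to\mathbb{R}$ with $F^{\mathrm{num}}(u,u)=F(u)$ such that for all grid states and all $i$, $U'(u_i)\,\partial_tu_i=-\frac{1}{\Delta x}(F^{\mathrm{num}}(u_i,u_{i+1})-F^{\mathrm{num}}(u_{i-1},u_i))$, with $\partial_tu_i$ given by the scheme. *)

theory Defs
  imports "HOL-Analysis.Analysis"
begin

definition avg :: "(real \<Rightarrow> real) \<Rightarrow> real \<Rightarrow> real \<Rightarrow> real" where
  "avg a um up = (a um + a up) / 2"

definition jump :: "(real \<Rightarrow> real) \<Rightarrow> real \<Rightarrow> real \<Rightarrow> real" where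
  "jump a um up = a up - a um"

definition fnum :: "nat \<Rightarrow> nat \<Rightarrow> real \<Rightarrow> (real \<Rightarrow> real \<Rightarrow> real) \<Rightarrow> real \<Rightarrow> real \<Rightarrow> real" where
  "fnum m n \<alpha> h um up =
     (real m + 1) / (real m + real n + 1) * (\<Sum>k=0..m+n. up ^ (m + n - k) * um ^ k)
     - \<alpha> * avg (\<lambda>v. v) um up * h um up * (\<Sum>k=0..m-1. up ^ (m - 1 - k) * um ^ k)
     - (1 - \<alpha>) * avg (\<lambda>v. v ^ (n + 1)) um up * (\<Sum>k=0..m-1. up ^ (m - 1 - k) * um ^ k)"

definition scheme_rhs :: "nat \<Rightarrow> nat \<Rightarrow> real \<Rightarrow> (real \<Rightarrow> real \<Rightarrow> real) \<Rightarrow> real \<Rightarrow> (int \<Rightarrow> real) \<Rightarrow> int \<Rightarrow> real" where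
  "scheme_rhs m n \<alpha> h dx u i =
     - ( (fnum m n \<alpha> h (u i) (u (i+1)) - fnum m n \<alpha> h (u (i-1)) (u i)) / dx
       - \<alpha> * (h (u i) (u (i+1)) * jump (\<lambda>v. v ^ m) (u i) (u (i+1))
              + h (u (i-1)) (u i) * jump (\<lambda>v. v ^ m) (u (i-1)) (u i)) / (2 * dx)
       - (1 - \<alpha>) * ((u i) ^ n * jump (\<lambda>v. v ^ m) (u i) (u (i+1))
              + (u i) ^ n * jump (\<lambda>v. v ^ m) (u (i-1)) (u i)) / (2 * dx))"

definition entropy_conservative ::
  "(real \<Rightarrow> real) \<Rightarrow> (real \<Rightarrow> real) \<Rightarrow> real \<Rightarrow> ((int \<Rightarrow> real) \<Rightarrow> int \<Rightarrow> real) \<Rightarrow> bool" where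
  "entropy_conservative U F dx dt \<longleftrightarrow>
     (\<exists>Fnum :: real \<Rightarrow> real \<Rightarrow> real. (\<forall>v. Fnum v v = F v) \<and>
        (\<forall>u :: int \<Rightarrow> real. \<forall>i. deriv U (u i) * dt u i
            = - (1 / dx) * (Fnum (u i) (u (i+1)) - Fnum (u (i-1)) (u i))))"

end

theory Submission
  imports Defs
begin

lemma geo:
  fixes a b :: real
  shows "(b - a) * (\<Sum>k=0..M. b ^ (M - k) * a ^ k) = b ^ Suc M - a ^ Suc M"
proof -
  have "a ^ Suc M - b ^ Suc M = (a - b) * (\<Sum>p<Suc M. a ^ p * b ^ (M - p))"
    by (rule diff_power_eq_sum)
  moreover have "{0..M} = {..<Suc M}" by auto
  ultimately show ?thesis by (simp add: algebra_simps)
qed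

lemma key:
  fixes x y z dx a c P0 P1 Q0 Q1 H0 H1 xn yn zn xN yN zN xm ym zm :: real
  assumes dx: "dx \<noteq> 0"
    and p1: "(z - y) * P1 = zN - yN" and p0: "(y - x) * P0 = yN - xN"
    and q1: "(z - y) * Q1 = zm - ym" and q0: "(y - x) * Q0 = ym - xm" and y1: "y1 = y * yn"
  shows "y * (- (((c * P1 - a * ((y + z)/2) * H1 * Q1 - (1 - a) * ((y1 + z1)/2) * Q1)
                 - (c * P0 - a * ((x + y)/2) * H0 * Q0 - (1 - a) * ((x1 + y1)/2) * Q0)) / dx
       - a * (H1 * (zm - ym) + H0 * (ym - xm)) / (2 * dx)
       - (1 - a) * (yn * (zm - ym) + yn * (ym - xm)) / (2 * dx)))
     = - (1 / dx) * (
        (y * (c * P1 - a * ((y + z)/2) * H1 * Q1 - (1 - a) * ((y1 + z1)/2) * Q1)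
         - a / 2 * ((y + z)/2) * H1 * (zm - ym) - (1 - a)/2 * ((y1 + z1)/2) * (zm - ym)
         + a / 4 * (z - y) * H1 * (zm - ym) + (1 - a)/4 * (z1 - y1) * (zm - ym) - c * yN)
      - (x * (c * P0 - a * ((x + y)/2) * H0 * Q0 - (1 - a) * ((x1 + y1)/2) * Q0)
         - a / 2 * ((x + y)/2) * H0 * (ym - xm) - (1 - a)/2 * ((x1 + y1)/2) * (ym - xm)
         + a / 4 * (y - x) * H0 * (ym - xm) + (1 - a)/4 * (y1 - x1) * (ym - xm) - c * xN))"
proof -
  have q1': "zm = ym + (z - y) * Q1" and q0': "xm = ym - (y - x) * Q0" using q1 q0 by simp_all
  have p1': "zN = yN + (z - y) * P1" and p0': "xN = yN - (y - x) * P0" using p1 p0 by simp_all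
  show ?thesis unfolding q1' q0' p1' p0' y1 using dx
    by (simp add: field_simps)
qed

lemma alg:
  fixes M N a v p q :: real
  assumes nz: "M + N + 1 \<noteq> 0"
  shows "v * ((M + 1) / (M + N + 1) * ((M + N + 1) * (v * p * q))
        - a * ((v + v) / 2) * p * (M * q)
        - (1 - a) * ((v * p + v * p) / 2) * (M * q))
        - (M + 1) / (M + N + 1) * (v * (v * p * q))
        = N / (M + N + 1) * (v * (v * p * q))"
proof -
  define W where "W = v * (v * p * q)"
  define K where "K = M + N + 1"
  have kz: "K \<noteq> 0" using nz K_def by simp
  have "(M + 1) / K * K = M + 1" using kz by simp
  then have e: "v * ((M + 1) / K * (K * (v * p * q))) = (M + 1) * W"
    unfolding W_def by (metis mult.assoc mult.left_commute)
  have "v * ((M + 1) / K * (K * (v * p * q))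
        - a * ((v + v) / 2) * p * (M * q)
        - (1 - a) * ((v * p + v * p) / 2) * (M * q))
        - (M + 1) / K * (v * (v * p * q))
        = v * ((M + 1) / K * (K * (v * p * q))) - M * W - (M + 1) / K * W"
    unfolding W_def by (simp add: algebra_simps)
  also have "\<dots> = W - (M + 1) / K * W" unfolding e by (simp add: algebra_simps)
  also have "\<dots> = N / K * W" using kz unfolding K_def by (simp add: field_simps)
  finally show ?thesis unfolding W_def K_def .
qed

lemma sumconst: "(\<Sum>k=0..M. (v::real) ^ (M - k) * v ^ k) = real (Suc M) * v ^ M"
proof -
  have "(\<Sum>k=0..M. v ^ (M - k) * v ^ k) = (\<Sum>k=0..M. v ^ M)"
    by (rule sum.cong) (auto simp: power_add[symmetric])
  then show ?thesis by simp
qed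

theorem mainTheorem8:
  fixes m n :: nat and \<alpha> dx :: real and h :: "real \<Rightarrow> real \<Rightarrow> real"
  assumes "m \<ge> 1" and "n \<ge> 1" and "dx > 0"
    and "\<And>a b. h a b = h b a"
    and "\<And>v. h v v = v ^ n"
  shows "entropy_conservative (\<lambda>v. v\<^sup>2 / 2)
           (\<lambda>v. real n / (real m + real n + 1) * v ^ (m + n + 1))
           dx (scheme_rhs m n \<alpha> h dx)"
proof -
  define c where "c = (real m + 1) / (real m + real n + 1)"
  define Fn where "Fn = (\<lambda>u v. u * fnum m n \<alpha> h u v
     - \<alpha> / 2 * avg (\<lambda>v. v) u v * h u v * jump (\<lambda>v. v ^ m) u v
     - (1 - \<alpha>) / 2 * avg (\<lambda>v. v ^ (n + 1)) u v * jump (\<lambda>v. v ^ m) u v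
     + \<alpha> / 4 * (v - u) * h u v * jump (\<lambda>v. v ^ m) u v
     + (1 - \<alpha>) / 4 * (v ^ (n + 1) - u ^ (n + 1)) * jump (\<lambda>v. v ^ m) u v
     - c * u ^ (m + n + 1))"
  have dU: "deriv (\<lambda>v. v\<^sup>2 / 2) w = w" for w :: real
  proof -
    have "((\<lambda>v. v\<^sup>2 / 2) has_real_derivative w) (at w)"
      by (auto intro!: derivative_eq_intros)
    then show ?thesis by (rule DERIV_imp_deriv)
  qed
  have diag: "Fn v v = real n / (real m + real n + 1) * v ^ (m + n + 1)" for v :: real
  proof -
    have s1: "(\<Sum>k=0..m+n. v ^ (m + n - k) * v ^ k) = (real m + real n + 1) * v ^ (m + n)"
      using sumconst[where M="m+n" and v=v] by simp
    have s2: "(\<Sum>k=0..m-1. v ^ (m - 1 - k) * v ^ k) = real m * v ^ (m - 1)"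
      using sumconst[where M="m-1" and v=v] assms(1) by simp
    obtain k where k: "m = Suc k" using assms(1) by (cases m) auto
    have e1: "v ^ (m + n) = v * v ^ n * v ^ (m - 1)" unfolding k by (simp add: power_add)
    have e2: "v ^ (m + n + 1) = v * (v * v ^ n * v ^ (m - 1))" unfolding k by (simp add: power_add)
    have e3: "v ^ (n + 1) = v * v ^ n" by simp
    have "Fn v v = v * (c * ((real m + real n + 1) * v ^ (m + n))
        - \<alpha> * ((v + v) / 2) * v ^ n * (real m * v ^ (m - 1))
        - (1 - \<alpha>) * ((v ^ (n + 1) + v ^ (n + 1)) / 2) * (real m * v ^ (m - 1)))
        - c * v ^ (m + n + 1)"
      unfolding Fn_def fnum_def avg_def jump_def s1 s2 assms(5) c_def by simp
    also have "\<dots> = real n / (real m + real n + 1) * v ^ (m + n + 1)"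
    proof -
      have nz: "real m + real n + 1 \<noteq> 0" by linarith
      show ?thesis unfolding e1 e2 e3 c_def by (rule alg[OF nz])
    qed
    finally show ?thesis .
  qed
  show ?thesis unfolding entropy_conservative_def
  proof (rule exI[where x=Fn], intro conjI allI)
    fix v show "Fn v v = real n / (real m + real n + 1) * v ^ (m + n + 1)" by (rule diag)
  next
    fix u :: "int \<Rightarrow> real" and i :: int
    define x where "x = u (i - 1)"
    define y where "y = u i"
    define z where "z = u (i + 1)"
    have m1: "Suc (m - 1) = m" using assms(1) by simp
    have g1: "(b - a) * (\<Sum>k=0..m-1. b ^ (m - 1 - k) * a ^ k) = b ^ m - a ^ m" for a b :: real
      using geo[of b a "m-1"] by (simp only: m1)
    have g2: "(b - a) * (\<Sum>k=0..m+n. b ^ (m + n - k) * a ^ k) = b ^ (m + n + 1) - a ^ (m + n + 1)" for a b :: real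
      using geo[of b a "m+n"] by (simp only: Suc_eq_plus1)
    show "deriv (\<lambda>v. v\<^sup>2 / 2) (u i) * scheme_rhs m n \<alpha> h dx u i =
         - (1 / dx) * (Fn (u i) (u (i + 1)) - Fn (u (i - 1)) (u i))"
      unfolding dU scheme_rhs_def Fn_def fnum_def avg_def jump_def x_def[symmetric] y_def[symmetric] z_def[symmetric]
        c_def[symmetric]
      apply (rule key)
      prefer 2
      apply (rule g2)
      prefer 2
      apply (rule g2)
      prefer 2
      apply (rule g1)
      prefer 2
      apply (rule g1)
      using assms(3) by simp_all
  qed
qed

end
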